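(* Let $\gamma > \frac{1 + \sqrt{5}}{2}$ and let $I$ be a $\gamma$-stable instance of the metric Steiner tree problem with optimal Steiner tree $\mathrm{OPT}$. Let $H$ be a subgraph of $\mathrm{OPT}$ and let $ab$ be an edge of $H$. If $c \in V$ is a vertex with $w_{ca} \ge \gamma w_{ab}$, then $ca$ is not an edge of $\mathrm{OPT}$.
   Context: An instance of the metric Steiner tree problem consists of a finite set $V$ of points of a metric space with metric $d$, a set $T \subseteq V$ of terminals, and the complete graph on $V$ with edge weights $w_{uv} = d(u,v)$. Points of $V \setminus T$ are Steiner points. A Steiner tree is a tree in this complete graph whose vertex set contains all of $T$; its weight is the sum of its edge weights. For $\gamma > 1$, the instance is $\gamma$-stable if it has a minimum-weight Steiner tree $\mathrm{OPT}$ such that for every $w' : V \times V \to \mathbb{R}_{\ge 0}$ with $w_{uv} \le w'_{uv} \le \gamma w_{uv}$ for all $u,v$, every minimum-weight Steiner tree with respect to $w'$ equals $\mathrm{OPT}$. *)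

theory Defs
  imports Complex_Main
begin

definition metric_on :: "'a set \<Rightarrow> ('a \<Rightarrow> 'a \<Rightarrow> real) \<Rightarrow> bool" where
  "metric_on V d \<longleftrightarrow>
     (\<forall>u\<in>V. \<forall>v\<in>V. d u v \<ge> 0 \<and> (d u v = 0 \<longleftrightarrow> u = v) \<and> d u v = d v u) \<and>
     (\<forall>u\<in>V. \<forall>v\<in>V. \<forall>x\<in>V. d u x \<le> d u v + d v x)"

definition complete_edges :: "'a set \<Rightarrow> 'a set set" where
  "complete_edges W = {{u, v} | u v. u \<in> W \<and> v \<in> W \<and> u \<noteq> v}"

text \<open>Edge weight induced by the metric: w_{uv} = d(u,v).\<close>
definition edge_w :: "('a \<Rightarrow> 'a \<Rightarrow> real) \<Rightarrow> 'a set \<Rightarrow> real" where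
  "edge_w d e = (SOME x. \<exists>u v. e = {u, v} \<and> x = d u v)"

definition is_tree :: "'a set \<Rightarrow> 'a set \<Rightarrow> 'a set set \<Rightarrow> bool" where
  "is_tree V W E \<longleftrightarrow> W \<subseteq> V \<and> W \<noteq> {} \<and> finite W \<and> E \<subseteq> complete_edges W \<and>
     (\<forall>x\<in>W. \<forall>y\<in>W. (\<lambda>p q. {p, q} \<in> E)\<^sup>*\<^sup>* x y) \<and>
     card E = card W - 1"

definition steiner_tree :: "'a set \<Rightarrow> 'a set \<Rightarrow> 'a set \<Rightarrow> 'a set set \<Rightarrow> bool" where
  "steiner_tree V T W E \<longleftrightarrow> is_tree V W E \<and> T \<subseteq> W"

definition min_steiner_tree ::
  "'a set \<Rightarrow> 'a set \<Rightarrow> ('a set \<Rightarrow> real) \<Rightarrow> 'a set \<Rightarrow> 'a set set \<Rightarrow> bool" where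
  "min_steiner_tree V T c W E \<longleftrightarrow> steiner_tree V T W E \<and>
     (\<forall>W' E'. steiner_tree V T W' E' \<longrightarrow> sum c E \<le> sum c E')"

definition perturbation ::
  "real \<Rightarrow> 'a set \<Rightarrow> ('a \<Rightarrow> 'a \<Rightarrow> real) \<Rightarrow> ('a set \<Rightarrow> real) \<Rightarrow> bool" where
  "perturbation \<gamma> V d w' \<longleftrightarrow>
     (\<forall>u\<in>V. \<forall>v\<in>V. u \<noteq> v \<longrightarrow> d u v \<le> w' {u, v} \<and> w' {u, v} \<le> \<gamma> * d u v)"

definition steiner_instance :: "'a set \<Rightarrow> ('a \<Rightarrow> 'a \<Rightarrow> real) \<Rightarrow> 'a set \<Rightarrow> bool" where
  "steiner_instance V d T \<longleftrightarrow> finite V \<and> metric_on V d \<and> T \<subseteq> V"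

definition stable_with_opt ::
  "real \<Rightarrow> 'a set \<Rightarrow> ('a \<Rightarrow> 'a \<Rightarrow> real) \<Rightarrow> 'a set \<Rightarrow> 'a set \<Rightarrow> 'a set set \<Rightarrow> bool" where
  "stable_with_opt \<gamma> V d T W0 E0 \<longleftrightarrow>
     \<gamma> > 1 \<and> steiner_instance V d T \<and> min_steiner_tree V T (edge_w d) W0 E0 \<and>
     (\<forall>w'. perturbation \<gamma> V d w' \<longrightarrow>
        (\<forall>W E. min_steiner_tree V T w' W E \<longrightarrow> W = W0 \<and> E = E0))"

definition gamma_stable :: "real \<Rightarrow> 'a set \<Rightarrow> ('a \<Rightarrow> 'a \<Rightarrow> real) \<Rightarrow> 'a set \<Rightarrow> bool" where
  "gamma_stable \<gamma> V d T \<longleftrightarrow> (\<exists>W0 E0. stable_with_opt \<gamma> V d T W0 E0)"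

end

theory Submission
  imports Defs
begin

lemma conn_card:
  fixes W :: "'a set" and E :: "'a set set"
  assumes fW: "finite W" and fE: "finite E" and r: "r \<in> W"
    and conn: "\<forall>x\<in>W. (\<lambda>p q. {p, q} \<in> E)\<^sup>*\<^sup>* x r"
  shows "card W \<le> card E + 1"
proof -
  define R where "R = (\<lambda>p q. {p, q} \<in> E)"
  define dist where "dist x = (LEAST n. (R ^^ n) x r)" for x
  have ex: "\<exists>n. (R ^^ n) x r" if "x \<in> W" for x
    using conn that unfolding R_def rtranclp_power by blast
  have dr: "(R ^^ dist x) x r" if "x \<in> W" for x
    unfolding dist_def using ex[OF that] by (rule LeastI_ex)
  have dle: "dist x \<le> n" if "(R ^^ n) x r" for x n
    unfolding dist_def using that by (rule Least_le)
  have step: "\<exists>y. {x, y} \<in> E \<and> dist y + 1 = dist x" if "x \<in> W" "x \<noteq> r" for x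
  proof -
    have "dist x \<noteq> 0" using dr[OF that(1)] that(2) by (metis relpowp_0_E)
    then obtain m where m: "dist x = Suc m" by (cases "dist x") auto
    have "(R ^^ Suc m) x r" using dr[OF that(1)] m by simp
    then obtain y where y: "R x y" "(R ^^ m) y r" using relpowp_Suc_D2 by metis
    have "dist y \<le> m" using dle y(2) by blast
    moreover have "(R ^^ dist y) y r" unfolding dist_def using y(2) by (rule LeastI)
    then have "(R ^^ Suc (dist y)) x r" using y(1) by (rule relpowp_Suc_I2[rotated])
    hence "dist x \<le> Suc (dist y)" using dle by blast
    ultimately show ?thesis using y(1) m unfolding R_def by auto
  qed
  define f where "f x = (SOME e. \<exists>y. e = {x, y} \<and> e \<in> E \<and> dist y + 1 = dist x)" for x
  have fx: "\<exists>y. f x = {x, y} \<and> f x \<in> E \<and> dist y + 1 = dist x" if "x \<in> W - {r}" for x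
    unfolding f_def by (rule someI_ex) (use step that in auto)
  have "inj_on f (W - {r})"
  proof (rule inj_onI)
    fix x x' assume a: "x \<in> W - {r}" "x' \<in> W - {r}" "f x = f x'"
    obtain y where y: "f x = {x, y}" "dist y + 1 = dist x" using fx[OF a(1)] by blast
    obtain y' where y': "f x' = {x', y'}" "dist y' + 1 = dist x'" using fx[OF a(2)] by blast
    show "x = x'"
    proof (rule ccontr)
      assume "x \<noteq> x'"
      then have "x = y'" "x' = y" using y y' a(3) by (auto simp: doubleton_eq_iff)
      then show False using y y' by auto
    qed
  qed
  moreover have "f ` (W - {r}) \<subseteq> E" using fx by blast
  ultimately have "card (W - {r}) \<le> card E" using fE by (metis card_inj_on_le)
  then show ?thesis using r fW by auto
qed

lemma edge_w_eq:
  assumes "metric_on V d" "u \<in> V" "v \<in> V"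
  shows "edge_w d {u, v} = d u v"
proof -
  have "\<exists>x u' v'. {u, v} = {u', v'} \<and> x = d u' v'" by blast
  hence "\<exists>u' v'. {u, v} = {u', v'} \<and> (SOME x. \<exists>u' v'. {u, v} = {u', v'} \<and> x = d u' v') = d u' v'"
    by (rule someI_ex[where P="\<lambda>x. \<exists>u' v'. {u, v} = {u', v'} \<and> x = d u' v'"])
  then obtain u' v' where "{u, v} = {u', v'}" "edge_w d {u, v} = d u' v'"
    unfolding edge_w_def by blast
  then show ?thesis using assms unfolding metric_on_def by (auto simp: doubleton_eq_iff)
qed

lemma conn_transfer:
  assumes "E0 - {{c, a}} \<subseteq> E1" "{c, b} \<in> E1" "{a, b} \<in> E1"
    and "(\<lambda>p q. {p, q} \<in> E0)\<^sup>*\<^sup>* x y"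
  shows "(\<lambda>p q. {p, q} \<in> E1)\<^sup>*\<^sup>* x y"
  using assms(4)
proof (induction rule: rtranclp_induct)
  case base then show ?case by simp
next
  case (step y z)
  have "(\<lambda>p q. {p, q} \<in> E1)\<^sup>*\<^sup>* y z"
  proof (cases "{y, z} = {c, a}")
    case True
    have cb: "(\<lambda>p q. {p, q} \<in> E1)\<^sup>*\<^sup>* c a"
      using assms(2,3) by (metis (no_types, lifting) insert_commute r_into_rtranclp rtranclp_trans)
    have bc: "(\<lambda>p q. {p, q} \<in> E1)\<^sup>*\<^sup>* a c"
      using assms(2,3) by (metis (no_types, lifting) insert_commute r_into_rtranclp rtranclp_trans)
    from True show ?thesis using cb bc by (auto simp: doubleton_eq_iff)
  next
    case False
    then show ?thesis using step assms(1) by blast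
  qed
  with step.IH show ?case by (rule rtranclp_trans)
qed

lemma golden: assumes "\<gamma> > (1 + sqrt 5) / 2" shows "\<gamma> * \<gamma> > \<gamma> + 1"
proof -
  have "2 * \<gamma> - 1 > sqrt 5" using assms by simp
  moreover have "sqrt 5 \<ge> 0" by simp
  ultimately have "(2 * \<gamma> - 1) * (2 * \<gamma> - 1) > sqrt 5 * sqrt 5"
    by (metis mult_strict_mono' order_le_less_trans)
  then show ?thesis by (simp add: algebra_simps)
qed


theorem mainTheorem8:
  fixes \<gamma> :: real and V T W0 :: "'a set" and d :: "'a \<Rightarrow> 'a \<Rightarrow> real"
    and E0 H :: "'a set set" and a b c :: 'a
  assumes "\<gamma> > (1 + sqrt 5) / 2"
    and "stable_with_opt \<gamma> V d T W0 E0"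
    and "H \<subseteq> E0"
    and "{a, b} \<in> H"
    and "c \<in> V"
    and "d c a \<ge> \<gamma> * d a b"
  shows "{c, a} \<notin> E0"
proof
  assume ca: "{c, a} \<in> E0"
  have g1: "\<gamma> > 1" and fV: "finite V" and met: "metric_on V d" and TV: "T \<subseteq> V"
    and mst: "min_steiner_tree V T (edge_w d) W0 E0"
    and stab: "\<And>w' W E. perturbation \<gamma> V d w' \<Longrightarrow> min_steiner_tree V T w' W E \<Longrightarrow> W = W0 \<and> E = E0"
    using assms(2) unfolding stable_with_opt_def steiner_instance_def by blast+
  have W0V: "W0 \<subseteq> V" and fW0: "finite W0" and E0c: "E0 \<subseteq> complete_edges W0"
    and conn0: "\<forall>x\<in>W0. \<forall>y\<in>W0. (\<lambda>p q. {p, q} \<in> E0)\<^sup>*\<^sup>* x y"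
    and cardE0: "card E0 = card W0 - 1" and TW0: "T \<subseteq> W0"
    using mst unfolding min_steiner_tree_def steiner_tree_def is_tree_def by blast+
  have ab: "{a, b} \<in> E0" using assms(3,4) by blast
  have "{a, b} \<in> complete_edges W0" using ab E0c by blast
  then have aW: "a \<in> W0" and bW: "b \<in> W0" and anb: "a \<noteq> b"
    unfolding complete_edges_def by (auto simp: doubleton_eq_iff)
  have "{c, a} \<in> complete_edges W0" using ca E0c by blast
  then have cW: "c \<in> W0" and cna: "c \<noteq> a"
    unfolding complete_edges_def by (auto simp: doubleton_eq_iff)
  have aV: "a \<in> V" and bV: "b \<in> V" and cV: "c \<in> V" using aW bW cW W0V by (auto dest: subsetD)
  have met1: "\<And>u v. u \<in> V \<Longrightarrow> v \<in> V \<Longrightarrow> d u v \<ge> 0 \<and> (d u v = 0 \<longleftrightarrow> u = v) \<and> d u v = d v u"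
    using met unfolding metric_on_def by blast
  have dab: "d a b > 0" using met1[OF aV bV] anb by linarith
  have dca: "d c a > 0" using met1[OF cV aV] cna by linarith
  have dsym: "d a b = d b a" using met1[OF aV bV] by blast
  have bnc: "b \<noteq> c"
  proof
    assume "b = c"
    then have "d c a = d a b" using dsym by simp
    then show False using assms(6) g1 dab by (simp add: mult_le_cancel_right1) 
  qed
  have fE0: "finite E0"
  proof -
    have "complete_edges W0 \<subseteq> Pow W0" unfolding complete_edges_def by auto
    then show ?thesis using E0c fW0 by (meson finite_Pow_iff finite_subset order_trans)
  qed
  have cb_ne: "{c, b} \<noteq> {c, a}" using anb by (auto simp: doubleton_eq_iff)
  have ab_ne: "{a, b} \<noteq> {c, a}" using bnc cna by (auto simp: doubleton_eq_iff)
  show False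
  proof (cases "{c, b} \<in> E0")
    case True
    define E' where "E' = E0 - {{c, a}}"
    have p1: "E0 - {{c, a}} \<subseteq> E'" unfolding E'_def by simp
    have p2: "{c, b} \<in> E'" unfolding E'_def using True cb_ne by simp
    have p3: "{a, b} \<in> E'" unfolding E'_def using ab ab_ne by simp
    have conn': "\<forall>x\<in>W0. (\<lambda>p q. {p, q} \<in> E') \<^sup>*\<^sup>* x a"
    proof
      fix x assume "x \<in> W0"
      then have "(\<lambda>p q. {p, q} \<in> E0)\<^sup>*\<^sup>* x a" using conn0 aW by blast
      then show "(\<lambda>p q. {p, q} \<in> E')\<^sup>*\<^sup>* x a"
        by (rule conn_transfer[OF p1 p2 p3])
    qed
    have "card W0 \<le> card E' + 1"
      by (rule conn_card[OF fW0 _ aW conn']) (use fE0 E'_def in simp)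
    moreover have "card E' = card E0 - 1" unfolding E'_def using ca fE0 by simp
    moreover have "card W0 \<ge> 2"
    proof -
      have "{a, c} \<subseteq> W0" using aW cW by simp
      then have "card {a, c} \<le> card W0" using fW0 by (rule card_mono[rotated])
      then show ?thesis using cna by simp
    qed
    ultimately show False using cardE0 by linarith
  next
    case False
    define E1 where "E1 = insert {c, b} (E0 - {{c, a}})"
    have cardE1: "card E1 = card E0" unfolding E1_def using False ca fE0
      by (simp add: card_insert_if) (metis Suc_pred card_gt_0_iff emptyE)
    have fE1: "finite E1" unfolding E1_def using fE0 by simp
    have E1c: "E1 \<subseteq> complete_edges W0"
      unfolding E1_def using E0c cW bW bnc unfolding complete_edges_def by blast
    have q1: "E0 - {{c, a}} \<subseteq> E1" unfolding E1_def by blast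
    have q2: "{c, b} \<in> E1" unfolding E1_def by simp
    have q3: "{a, b} \<in> E1" unfolding E1_def using ab ab_ne by simp
    have conn1: "\<forall>x\<in>W0. \<forall>y\<in>W0. (\<lambda>p q. {p, q} \<in> E1)\<^sup>*\<^sup>* x y"
    proof (intro ballI)
      fix x y assume "x \<in> W0" "y \<in> W0"
      then have "(\<lambda>p q. {p, q} \<in> E0)\<^sup>*\<^sup>* x y" using conn0 by blast
      then show "(\<lambda>p q. {p, q} \<in> E1)\<^sup>*\<^sup>* x y"
        by (rule conn_transfer[OF q1 q2 q3])
    qed
    have st1: "steiner_tree V T W0 E1"
      unfolding steiner_tree_def is_tree_def using W0V aW fW0 E1c conn1 cardE1 cardE0 TW0 by auto
    define w' where "w' e = (if e = {c, a} then \<gamma> * edge_w d e else edge_w d e)" for e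
    have pert: "perturbation \<gamma> V d w'"
      unfolding perturbation_def
    proof (intro ballI impI)
      fix u v assume uv: "u \<in> V" "v \<in> V" "u \<noteq> v"
      have "d u v \<ge> 0" using met1[OF uv(1,2)] by blast
      then show "d u v \<le> w' {u, v} \<and> w' {u, v} \<le> \<gamma> * d u v"
        unfolding w'_def edge_w_eq[OF met uv(1,2)] using g1
        by (auto simp: mult_le_cancel_right1)
    qed
    define S where "S = {(W, E). steiner_tree V T W E}"
    have "S \<subseteq> Pow V \<times> Pow (Pow V)"
      unfolding S_def steiner_tree_def is_tree_def complete_edges_def by auto
    then have fS: "finite S" using fV by (meson finite_Pow_iff finite_SigmaI finite_subset)
    have inS: "(W0, E0) \<in> S" using mst unfolding S_def min_steiner_tree_def by simp
    define f where "f = (\<lambda>(W::'a set, E). sum w' E)"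
    define m where "m = Min (f ` S)"
    have "m \<in> f ` S" unfolding m_def using fS inS by (intro Min_in) auto
    then obtain Wm Em where mS: "(Wm, Em) \<in> S" and fm: "f (Wm, Em) = m" by auto
    have mle: "m \<le> f p" if "p \<in> S" for p unfolding m_def using fS that by simp
    have "min_steiner_tree V T w' Wm Em"
      unfolding min_steiner_tree_def
    proof (intro conjI allI impI)
      show "steiner_tree V T Wm Em" using mS unfolding S_def by simp
      fix W' E' assume "steiner_tree V T W' E'"
      then have "(W', E') \<in> S" unfolding S_def by simp
      then show "sum w' Em \<le> sum w' E'" using mle fm unfolding f_def by fastforce
    qed
    then have "Wm = W0 \<and> Em = E0" using stab pert by blast
    then have le: "sum w' E0 \<le> sum w' E1"
      using mle[of "(W0, E1)"] fm st1 unfolding S_def f_def by auto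
    define R where "R = sum (edge_w d) (E0 - {{c, a}})"
    have sR: "sum w' (E0 - {{c, a}}) = R" unfolding R_def w'_def by (rule sum.cong) auto
    have s0: "sum w' E0 = \<gamma> * d c a + R"
      using sum.remove[OF fE0 ca, of w'] sR edge_w_eq[OF met cV aV] unfolding w'_def by simp
    have s1: "sum w' E1 = d c b + R"
    proof -
      have "sum w' E1 = w' {c, b} + sum w' (E0 - {{c, a}})"
        unfolding E1_def using fE0 False by (simp add: sum.insert)
      moreover have "w' {c, b} = d c b" unfolding w'_def using cb_ne edge_w_eq[OF met cV bV] by simp
      ultimately show ?thesis using sR by simp
    qed
    have tri0: "\<forall>u\<in>V. \<forall>v\<in>V. \<forall>x\<in>V. d u x \<le> d u v + d v x" using met unfolding metric_on_def by blast
    have tri: "d c b \<le> d c a + d a b" using tri0 cV aV bV by blast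
    have gg: "\<gamma> * \<gamma> > \<gamma> + 1" using golden assms(1) by blast
    have "\<gamma> * d c b \<le> \<gamma> * d c a + \<gamma> * d a b" using tri g1
      by (metis distrib_left less_eq_real_def mult_left_mono order.strict_trans zero_less_one)
    moreover have "(\<gamma> * \<gamma> - \<gamma> - 1) * d c a > 0" using gg dca by simp
    ultimately have "\<gamma> * d c b < \<gamma> * (\<gamma> * d c a)" using assms(6) by (simp add: algebra_simps)
    then have "d c b < \<gamma> * d c a" using g1 by simp
    then show False using le s0 s1 by linarith
  qed
qed

end
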